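(* Let $T,T'$ be fragment one-to-one, connected, reduced linear trellises of the same length $n$. If $C^i(T)=C^i(T')$ for some integer $i>1$, then $T$ and $T'$ are isomorphic. In particular this applies to nonmergeable, one-to-one, reduced linear trellises (e.g. minimal linear trellises).
   Context: Let $\mathbb{F}$ be a finite field and $n\ge1$; indices are taken in $\mathbb{Z}_n$. A trellis $T$ of length $n$ over $\mathbb{F}$ consists of pairwise disjoint finite vertex sets $V_i(T)$, $i\in\mathbb{Z}_n$, and edge sets $E_i(T)\subseteq V_i(T)\times\mathbb{F}\times V_{i+1}(T)$; $(v,\alpha,w)\in E_i(T)$ is an edge from $v$ to $w$ with label $\alpha$. Trellises are trim. $T$ is linear if each $V_i(T)$ is an $\mathbb{F}$-vector space and each $E_i(T)$ a subspace. A path of length $m$ is $v_0\alpha_0v_1\cdots\alpha_{m-1}v_m$ with each $(v_j,\alpha_j,v_{j+1})$ an edge (time index increasing by one mod $n$ each step); its label sequence is $\alpha_0\cdots\alpha_{m-1}$. A cycle is a closed path of length $n$ starting in $V_0(T)$; $T$ is reduced if every edge lies on some cycle; connected if for any two distinct vertices there is a directed path from one to the other; fragment one-to-one if any two distinct paths of length $n$ starting in the same vertex set $V_j(T)$ have distinct label sequences. For $i\ge1$, an $i$-cycle is a closed path of length $in$ starting in $V_0(T)$, and $C^i(T)\subseteq\mathbb{F}^{in}$ is the set of label sequences of $i$-cycles. An isomorphism $T\to T'$ is a family of bijections $f_j:V_j(T)\to V_j(T')$ with $(v,\alpha,w)\in E_j(T)\iff(f_j(v),\alpha,f_{j+1}(w))\in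 E_j(T')$. $T$ is nonmergeable if there are no $j$ and $v\ne w\in V_j(T)$ such that identifying $v,w$ yields a trellis representing the same code; one-to-one if distinct cycles have distinct label sequences; a minimal linear trellis is a linear trellis $T$ for which no linear trellis $T'$ with the same code satisfies $|V_j(T')|\le|V_j(T)|$ for all $j$ with some strict inequality. *)

theory Defs
  imports Complex_Main
begin

text \<open>Vertex sets are kept apart by their time index,
  i.e. a vertex is really a pair (j, v) with v in tverts T j.\<close>

record ('v, 'f) trellis =
  tverts :: "nat \<Rightarrow> 'v set"
  tedges :: "nat \<Rightarrow> ('v \<times> 'f \<times> 'v) set"

definition is_trellis :: "nat \<Rightarrow> ('v, 'f) trellis \<Rightarrow> bool" where
  "is_trellis n T \<longleftrightarrow> n \<ge> 1 \<and>
     (\<forall>j<n. finite (tverts T j) \<and>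
            tedges T j \<subseteq> tverts T j \<times> UNIV \<times> tverts T (Suc j mod n)) \<and>
     \<comment> \<open>trim: every vertex has an outgoing and an incoming edge\<close>
     (\<forall>j<n. \<forall>v\<in>tverts T j. (\<exists>a w. (v, a, w) \<in> tedges T j) \<and>
                             (\<exists>u a. (u, a, v) \<in> tedges T ((j + n - 1) mod n)))"

definition linear_trellis ::
  "('f::field \<Rightarrow> 'v::ab_group_add \<Rightarrow> 'v) \<Rightarrow> nat \<Rightarrow> ('v, 'f) trellis \<Rightarrow> bool" where
  "linear_trellis scale n T \<longleftrightarrow> vector_space scale \<and> is_trellis n T \<and>
     (\<forall>j<n. 0 \<in> tverts T j \<and> (\<forall>x\<in>tverts T j. \<forall>y\<in>tverts T j. x + y \<in> tverts T j) \<and>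
        (\<forall>c. \<forall>x\<in>tverts T j. scale c x \<in> tverts T j) \<and>
        (0, 0, 0) \<in> tedges T j \<and>
        (\<forall>v a w v' a' w'. (v, a, w) \<in> tedges T j \<longrightarrow> (v', a', w') \<in> tedges T j \<longrightarrow>
              (v + v', a + a', w + w') \<in> tedges T j) \<and>
        (\<forall>c v a w. (v, a, w) \<in> tedges T j \<longrightarrow> (scale c v, c * a, scale c w) \<in> tedges T j))"

definition tpath :: "nat \<Rightarrow> ('v, 'f) trellis \<Rightarrow> nat \<Rightarrow> 'v list \<Rightarrow> 'f list \<Rightarrow> bool" where
  "tpath n T j vs as \<longleftrightarrow> length vs = Suc (length as) \<and> vs ! 0 \<in> tverts T (j mod n) \<and>
     (\<forall>k<length as. (vs ! k, as ! k, vs ! Suc k) \<in> tedges T ((j + k) mod n))"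

definition icycle :: "nat \<Rightarrow> ('v, 'f) trellis \<Rightarrow> nat \<Rightarrow> 'v list \<Rightarrow> 'f list \<Rightarrow> bool" where
  "icycle n T i vs as \<longleftrightarrow> tpath n T 0 vs as \<and> length as = i * n \<and> last vs = hd vs"

definition icode :: "nat \<Rightarrow> ('v, 'f) trellis \<Rightarrow> nat \<Rightarrow> 'f list set" where
  "icode n T i = {as. \<exists>vs. icycle n T i vs as}"

definition reduced :: "nat \<Rightarrow> ('v, 'f) trellis \<Rightarrow> bool" where
  "reduced n T \<longleftrightarrow> (\<forall>j<n. \<forall>e\<in>tedges T j. \<exists>vs as. icycle n T 1 vs as \<and>
                                 (vs ! j, as ! j, vs ! Suc j) = e)"

definition reaches :: "nat \<Rightarrow> ('v, 'f) trellis \<Rightarrow> nat \<Rightarrow> 'v \<Rightarrow> nat \<Rightarrow> 'v \<Rightarrow> bool" where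
  "reaches n T j v k w \<longleftrightarrow> (\<exists>vs as. tpath n T j vs as \<and> hd vs = v \<and> last vs = w \<and>
                                  (j + length as) mod n = k)"

definition connected_trellis :: "nat \<Rightarrow> ('v, 'f) trellis \<Rightarrow> bool" where
  "connected_trellis n T \<longleftrightarrow> (\<forall>j<n. \<forall>k<n. \<forall>v\<in>tverts T j. \<forall>w\<in>tverts T k.
      (j, v) \<noteq> (k, w) \<longrightarrow> reaches n T j v k w \<or> reaches n T k w j v)"

definition fragment_one_to_one :: "nat \<Rightarrow> ('v, 'f) trellis \<Rightarrow> bool" where
  "fragment_one_to_one n T \<longleftrightarrow> (\<forall>j<n. \<forall>vs vs' as as'.
      tpath n T j vs as \<longrightarrow> tpath n T j vs' as' \<longrightarrow> length as = n \<longrightarrow> length as' = n \<longrightarrow>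
      (vs, as) \<noteq> (vs', as') \<longrightarrow> as \<noteq> as')"

definition one_to_one :: "nat \<Rightarrow> ('v, 'f) trellis \<Rightarrow> bool" where
  "one_to_one n T \<longleftrightarrow> (\<forall>vs vs' as as'. icycle n T 1 vs as \<longrightarrow> icycle n T 1 vs' as' \<longrightarrow>
      (vs, as) \<noteq> (vs', as') \<longrightarrow> as \<noteq> as')"

definition merge :: "nat \<Rightarrow> ('v, 'f) trellis \<Rightarrow> nat \<Rightarrow> 'v \<Rightarrow> 'v \<Rightarrow> ('v, 'f) trellis" where
  "merge n T j v w =
     \<lparr> tverts = (\<lambda>k. if k = j then tverts T k - {w} else tverts T k),
       tedges = (\<lambda>k. (\<lambda>(a, l, b). (if k = j \<and> a = w then v else a, l,
                                   if Suc k mod n = j \<and> b = w then v else b)) ` tedges T k) \<rparr>"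

definition nonmergeable :: "nat \<Rightarrow> ('v, 'f) trellis \<Rightarrow> bool" where
  "nonmergeable n T \<longleftrightarrow> \<not> (\<exists>j<n. \<exists>v\<in>tverts T j. \<exists>w\<in>tverts T j. v \<noteq> w \<and>
                                 icode n (merge n T j v w) 1 = icode n T 1)"

definition trellis_iso :: "nat \<Rightarrow> ('v, 'f) trellis \<Rightarrow> ('w, 'f) trellis \<Rightarrow> bool" where
  "trellis_iso n T T' \<longleftrightarrow> (\<exists>f :: nat \<Rightarrow> 'v \<Rightarrow> 'w. \<forall>j<n.
      bij_betw (f j) (tverts T j) (tverts T' j) \<and>
      (\<forall>v\<in>tverts T j. \<forall>w\<in>tverts T (Suc j mod n). \<forall>a.
         (v, a, w) \<in> tedges T j \<longleftrightarrow> (f j v, a, f (Suc j mod n) w) \<in> tedges T' j))"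

end

theory Submission imports Defs begin

definition walk :: "nat \<Rightarrow> ('v,'f) trellis \<Rightarrow> (nat \<Rightarrow> 'v) \<Rightarrow> (nat \<Rightarrow> 'f) \<Rightarrow> bool" where
  "walk n T X A \<longleftrightarrow> (\<forall>k. (X k, A k, X (Suc k)) \<in> tedges T (k mod n))"

lemma lin_n: "linear_trellis sc n T \<Longrightarrow> n \<ge> 1"
  by (simp add: linear_trellis_def is_trellis_def)

lemma lin_zero: "linear_trellis sc n T \<Longrightarrow> j < n \<Longrightarrow> (0,0,0) \<in> tedges T j"
  by (simp add: linear_trellis_def)

lemma lin_add: "linear_trellis sc n T \<Longrightarrow> j < n \<Longrightarrow> (v,a,w) \<in> tedges T j \<Longrightarrow> (v',a',w') \<in> tedges T j
   \<Longrightarrow> (v+v',a+a',w+w') \<in> tedges T j"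
  unfolding linear_trellis_def by blast

lemma lin_neg:
  fixes sc :: "'f::field \<Rightarrow> 'v::ab_group_add \<Rightarrow> 'v"
  assumes "linear_trellis sc n T" "j < n" "(v,a,w) \<in> tedges T j"
  shows "(-v,-a,-w) \<in> tedges T j"
proof -
  have vs: "vector_space sc" using assms(1) by (simp add: linear_trellis_def)
  have "(sc (-1) v, (-1) * a, sc (-1) w) \<in> tedges T j"
    using assms unfolding linear_trellis_def by blast
  moreover have "\<And>x. sc (-1) x = - x"
  proof -
    fix x
    have ax: "\<And>a b x. sc (a+b) x = sc a x + sc b x" "\<And>x. sc 1 x = x"
      using vs unfolding vector_space_def by auto
    have "sc 0 x + sc 0 x = sc 0 x + 0" using ax(1)[of 0 0 x] by simp
    then have z: "sc 0 x = 0" by simp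
    have "sc (-1) x + x = 0" using ax(1)[of "-1" 1 x] ax(2) z by simp
    then show "sc (-1) x = - x" by (simp add: eq_neg_iff_add_eq_0)
  qed
  ultimately show ?thesis by simp
qed

lemma lin_diff:
  fixes sc :: "'f::field \<Rightarrow> 'v::ab_group_add \<Rightarrow> 'v"
  assumes "linear_trellis sc n T" "j < n" "(v,a,w) \<in> tedges T j" "(v',a',w') \<in> tedges T j"
  shows "(v-v',a-a',w-w') \<in> tedges T j"
  using lin_add[OF assms(1,2,3) lin_neg[OF assms(1,2,4)]] by simp

lemma walk_zero: "linear_trellis sc n T \<Longrightarrow> walk n T (\<lambda>_. 0) (\<lambda>_. 0)"
proof -
  assume l: "linear_trellis sc n T"
  have "n > 0" using lin_n[OF l] by simp
  then show ?thesis unfolding walk_def using lin_zero[OF l] by simp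
qed

lemma walk_diff:
  fixes sc :: "'f::field \<Rightarrow> 'v::ab_group_add \<Rightarrow> 'v"
  assumes "linear_trellis sc n T" "walk n T X A" "walk n T Y B"
  shows "walk n T (\<lambda>k. X k - Y k) (\<lambda>k. A k - B k)"
  unfolding walk_def
proof
  fix k
  have "k mod n < n" using lin_n[OF assms(1)] by simp
  then show "(X k - Y k, A k - B k, X (Suc k) - Y (Suc k)) \<in> tedges T (k mod n)"
    using lin_diff[OF assms(1)] assms(2,3) unfolding walk_def by blast
qed

lemma walk_add:
  fixes sc :: "'f::field \<Rightarrow> 'v::ab_group_add \<Rightarrow> 'v"
  assumes "linear_trellis sc n T" "walk n T X A" "walk n T Y B"
  shows "walk n T (\<lambda>k. X k + Y k) (\<lambda>k. A k + B k)"
  unfolding walk_def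
proof
  fix k
  have "k mod n < n" using lin_n[OF assms(1)] by simp
  then show "(X k + Y k, A k + B k, X (Suc k) + Y (Suc k)) \<in> tedges T (k mod n)"
    using lin_add[OF assms(1)] assms(2,3) unfolding walk_def by blast
qed

lemma walk_vert: "linear_trellis sc n T \<Longrightarrow> walk n T X A \<Longrightarrow> X k \<in> tverts T (k mod n)"
proof -
  assume l: "linear_trellis sc n T" and w: "walk n T X A"
  have n: "n > 0" using lin_n[OF l] by simp
  have "(X k, A k, X (Suc k)) \<in> tedges T (k mod n)" using w unfolding walk_def by blast
  moreover have "tedges T (k mod n) \<subseteq> tverts T (k mod n) \<times> UNIV \<times> tverts T (Suc (k mod n) mod n)"
    using l n unfolding linear_trellis_def is_trellis_def by simp
  ultimately show ?thesis by blast
qed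

lemma window:
  assumes lin: "linear_trellis sc n T" and F: "fragment_one_to_one n T"
    and X: "walk n T X A" and Y: "walk n T Y B" and eq: "\<forall>t<n. A (p+t) = B (p+t)"
    and t: "t \<le> n"
  shows "X (p+t) = Y (p+t)"
proof -
  have n: "n \<ge> 1" using lin_n[OF lin] .
  define vs where "vs = map (\<lambda>t. X (p+t)) [0..<Suc n]"
  define vs' where "vs' = map (\<lambda>t. Y (p+t)) [0..<Suc n]"
  define as where "as = map (\<lambda>t. A (p+t)) [0..<n]"
  define as' where "as' = map (\<lambda>t. B (p+t)) [0..<n]"
  have aa: "as = as'" unfolding as_def as'_def using eq by simp
  have "tpath n T (p mod n) vs as"
    unfolding tpath_def vs_def as_def
    using walk_vert[OF lin X, of p] X unfolding walk_def
    by (simp add: mod_add_left_eq nth_map_upt del: upt_Suc)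
  moreover have "tpath n T (p mod n) vs' as'"
    unfolding tpath_def vs'_def as'_def
    using walk_vert[OF lin Y, of p] Y unfolding walk_def
    by (simp add: mod_add_left_eq nth_map_upt del: upt_Suc)
  moreover have "p mod n < n" using n by simp
  moreover have "length as = n" "length as' = n" by (simp_all add: as_def as'_def)
  ultimately have "(vs, as) = (vs', as')"
    using F aa unfolding fragment_one_to_one_def by blast
  then have "vs ! t = vs' ! t" by simp
  then show ?thesis using t unfolding vs_def vs'_def
    by (simp add: nth_map_upt del: upt_Suc)
qed

lemma uniq:
  assumes lin: "linear_trellis sc n T" and F: "fragment_one_to_one n T"
    and X: "walk n T X A" and Y: "walk n T Y A"
  shows "X = Y"
proof
  fix k show "X k = Y k" using window[OF lin F X Y, of k 0] by simp
qed

lemma per_mult: "(\<forall>k. f (k+m) = f k) \<Longrightarrow> f (k + q*m) = f (k::nat)"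
proof (induction q)
  case 0 then show ?case by simp
next
  case (Suc q)
  then have "f (k + q*m + m) = f (k + q*m)" by blast
  have e: "k + Suc q * m = (k + q*m) + m" by simp
  show ?case unfolding e using Suc by simp
qed

lemma per_mod: "(\<forall>k. f (k+m) = f k) \<Longrightarrow> f (k mod m) = f (k::nat)"
  using per_mult[of f m "k mod m" "k div m"] mod_div_mult_eq[of k m] by simp

lemma lastnth: "length vs = Suc m \<Longrightarrow> last vs = hd vs \<Longrightarrow> vs ! m = vs ! 0"
  by (metis diff_Suc_1 hd_conv_nth last_conv_nth list.size(3) nat.simps(3))

lemma icycle_walk:
  assumes n: "n \<ge> 1" and i: "i \<ge> 1" and c: "icycle n T i vs as"
  shows "walk n T (\<lambda>k. vs ! (k mod (i*n))) (\<lambda>k. as ! (k mod (i*n)))"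
    and "length as = i*n"
  unfolding walk_def
proof -
  let ?m = "i*n"
  have m: "?m > 0" using n i by simp
  have len: "length as = ?m" "length vs = Suc ?m" using c unfolding icycle_def tpath_def by auto
  then show "length as = i*n" by simp
  have lh: "vs ! ?m = vs ! 0" using c len unfolding icycle_def
    by (simp add: lastnth)
  have ed: "\<And>r. r < ?m \<Longrightarrow> (vs!r, as!r, vs!Suc r) \<in> tedges T (r mod n)"
    using c len unfolding icycle_def tpath_def by auto
  show "\<forall>k. (vs ! (k mod ?m), as ! (k mod ?m), vs ! (Suc k mod ?m)) \<in> tedges T (k mod n)"
  proof
    fix k
    let ?r = "k mod ?m"
    have r: "?r < ?m" using m by simp
    have tm: "?r mod n = k mod n" by (simp add: mod_mod_cancel)
    have "vs ! (Suc k mod ?m) = vs ! Suc ?r"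
      using lh by (simp add: mod_Suc)
    then show "(vs ! ?r, as ! ?r, vs ! (Suc k mod ?m)) \<in> tedges T (k mod n)"
      using ed[OF r] tm by simp
  qed
qed

lemma walk_icycle:
  assumes l: "linear_trellis sc n T" and w: "walk n T X A" and p: "X (i*n) = X 0"
  shows "icycle n T i (map X [0..<Suc (i*n)]) (map A [0..<i*n])"
proof -
  have "X 0 \<in> tverts T 0" using walk_vert[OF l w, of 0] by simp
  then show ?thesis unfolding icycle_def tpath_def using w p unfolding walk_def
    by (simp add: nth_map_upt last_map hd_map del: upt_Suc)
qed

lemma icode_walk:
  assumes n: "n \<ge> 1" and i: "i \<ge> 1" and c: "as \<in> icode n T i"
  shows "\<exists>X. walk n T X (\<lambda>k. as ! (k mod (i*n))) \<and> X (i*n) = X 0" and "length as = i*n"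
proof -
  obtain vs where v: "icycle n T i vs as" using c unfolding icode_def by blast
  show "\<exists>X. walk n T X (\<lambda>k. as ! (k mod (i*n))) \<and> X (i*n) = X 0"
    using icycle_walk(1)[OF n i v] by auto
  show "length as = i*n" using icycle_walk(2)[OF n i v] .
qed

lemma walk_icode:
  assumes l: "linear_trellis sc n T" and w: "walk n T X A" and p: "X (i*n) = X 0"
  shows "map A [0..<i*n] \<in> icode n T i"
  using walk_icycle[OF l w p] unfolding icode_def by blast

lemma transfer:
  assumes l: "linear_trellis sc n T" and i: "i \<ge> 1"
    and sub: "icode n T i \<subseteq> icode n T' i"
    and w: "walk n T X A" and p: "X (i*n) = X 0" and pa: "\<forall>k. A (k + i*n) = A k"
  shows "\<exists>Y. walk n T' Y A"
proof -
  have n: "n \<ge> 1" using lin_n[OF l] .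
  have "map A [0..<i*n] \<in> icode n T' i" using walk_icode[OF l w p] sub by blast
  then obtain Y where Y: "walk n T' Y (\<lambda>k. map A [0..<i*n] ! (k mod (i*n)))"
    using icode_walk[OF n i] by blast
  have m: "i*n > 0" using n i by simp
  have "(\<lambda>k. map A [0..<i*n] ! (k mod (i*n))) = A"
  proof
    fix k
    have "map A [0..<i*n] ! (k mod (i*n)) = A (k mod (i*n))" using m by simp
    also have "\<dots> = A k" using per_mod[OF pa] .
    finally show "map A [0..<i*n] ! (k mod (i*n)) = A k" .
  qed
  then show ?thesis using Y by auto
qed

lemma edge_walk:
  assumes l: "linear_trellis sc n T" and r: "reduced n T" and j: "j < n"
    and e: "(v,a,w) \<in> tedges T j"
  shows "\<exists>X A. walk n T X A \<and> (\<forall>k. X (k+n) = X k) \<and> (\<forall>k. A (k+n) = A k)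
     \<and> X j = v \<and> A j = a \<and> X (Suc j) = w"
proof -
  have n: "n \<ge> 1" using lin_n[OF l] .
  obtain vs as where c: "icycle n T 1 vs as" and ee: "(vs ! j, as ! j, vs ! Suc j) = (v,a,w)"
    using r j e unfolding reduced_def by blast
  have len: "length as = n" "length vs = Suc n" using c unfolding icycle_def tpath_def by auto
  have lh: "vs ! n = vs ! 0" using c len unfolding icycle_def
    by (simp add: lastnth)
  define X where "X = (\<lambda>k. vs ! (k mod n))"
  define A where "A = (\<lambda>k. as ! (k mod n))"
  have "walk n T X A" unfolding X_def A_def using icycle_walk(1)[OF n _ c] by simp
  moreover have "\<forall>k. X (k+n) = X k" "\<forall>k. A (k+n) = A k" by (simp_all add: X_def A_def)
  moreover have "X j = v" "A j = a" using ee j by (simp_all add: X_def A_def)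
  moreover have "X (Suc j) = w"
  proof (cases "Suc j = n")
    case True then show ?thesis using ee lh by (simp add: X_def)
  next
    case False then show ?thesis using ee j by (simp add: X_def)
  qed
  ultimately show ?thesis by blast
qed

lemma vert_walk:
  assumes l: "linear_trellis sc n T" and r: "reduced n T" and j: "j < n"
    and v: "v \<in> tverts T j"
  shows "\<exists>X A. walk n T X A \<and> (\<forall>k. X (k+n) = X k) \<and> (\<forall>k. A (k+n) = A k) \<and> X j = v"
proof -
  have "is_trellis n T" using l unfolding linear_trellis_def by simp
  then have "\<forall>v\<in>tverts T j. (\<exists>a w. (v, a, w) \<in> tedges T j)"
    using j unfolding is_trellis_def by simp
  then obtain a w where "(v,a,w) \<in> tedges T j" using v by blast
  then show ?thesis using edge_walk[OF l r j] by blast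
qed


lemma walk_shift:
  assumes W: "walk n T W C" and pc: "\<forall>k. C (k+n) = C k"
  shows "walk n T (\<lambda>k. W (k+n)) C"
  unfolding walk_def
proof
  fix k
  have "(W (k+n), C (k+n), W (Suc (k+n))) \<in> tedges T ((k+n) mod n)"
    using W unfolding walk_def by blast
  then show "(W (k+n), C k, W (Suc k + n)) \<in> tedges T (k mod n)" using pc by simp
qed

lemma walk_per:
  assumes l: "linear_trellis sc n T" and F: "fragment_one_to_one n T"
    and W: "walk n T W C" and pc: "\<forall>k. C (k+n) = C k"
  shows "\<forall>k. W (k+n) = W k"
  using uniq[OF l F walk_shift[OF W pc] W] by metis

lemma crux:
  fixes sc :: "'f::field \<Rightarrow> 'v::ab_group_add \<Rightarrow> 'v" and sc' :: "'f \<Rightarrow> 'w::ab_group_add \<Rightarrow> 'w"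
  assumes l: "linear_trellis sc n T" and l': "linear_trellis sc' n T'"
    and F': "fragment_one_to_one n T'"
    and i: "i \<ge> 2" and sub: "icode n T i \<subseteq> icode n T' i"
    and Z: "walk n T Z C" and pz: "\<forall>k. Z (k+n) = Z k" and pc: "\<forall>k. C (k+n) = C k"
    and j: "j < n" and z0: "Z j = 0" and W: "walk n T' W C"
  shows "W j = 0"
proof -
  have n: "n \<ge> 1" using lin_n[OF l] .
  define m where "m = i*n"
  have m2: "2*n \<le> m" using i unfolding m_def by simp
  have jm: "j + n < m" using m2 j by simp
  have dv: "n dvd m" unfolding m_def by simp
  define E where "E = (\<lambda>k. if j \<le> k mod m \<and> k mod m \<le> j+n then Z (k mod m) else 0)"
  define B where "B = (\<lambda>k. if j \<le> k mod m \<and> k mod m < j+n then C (k mod m) else 0)"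
  have zjn: "Z (j+n) = 0" using pz z0 by simp
  have EW: "walk n T E B" unfolding walk_def
  proof
    fix k
    let ?r = "k mod m"
    have r: "?r < m" using jm by simp
    have tm: "?r mod n = k mod n" using dv by (simp add: mod_mod_cancel)
    have sk: "Suc k mod m = (if Suc ?r = m then 0 else Suc ?r)" by (simp add: mod_Suc)
    have z0e: "(0,0,0) \<in> tedges T (k mod n)" using lin_zero[OF l] n by simp
    show "(E k, B k, E (Suc k)) \<in> tedges T (k mod n)"
    proof (cases "j \<le> ?r \<and> ?r < j+n")
      case True
      then have s: "Suc k mod m = Suc ?r" using sk jm by auto
      have "(Z ?r, C ?r, Z (Suc ?r)) \<in> tedges T (?r mod n)" using Z unfolding walk_def by blast
      then show ?thesis using True s tm by (simp add: E_def B_def)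
    next
      case False
      have b: "B k = 0" using False unfolding B_def by auto
      have e: "E k = 0"
      proof (cases "?r = j+n")
        case True then show ?thesis using zjn by (simp add: E_def)
      next
        case False
        then have "\<not> (j \<le> ?r \<and> ?r \<le> j+n)" using \<open>\<not> (j \<le> ?r \<and> ?r < j+n)\<close> by auto
        then show ?thesis unfolding E_def by auto
      qed
      have e2: "E (Suc k) = 0"
      proof (cases "Suc ?r = m")
        case True
        then have "Suc k mod m = 0" using sk by simp
        then show ?thesis using z0 by (auto simp add: E_def)
      next
        case F2: False
        then have s: "Suc k mod m = Suc ?r" using sk by simp
        show ?thesis
        proof (cases "?r < j")
          case True
          then show ?thesis using s z0 by (cases "Suc ?r = j") (auto simp: E_def)
        next
          case False
          then have "Suc ?r > j+n" using \<open>\<not> (j \<le> ?r \<and> ?r < j+n)\<close> by simp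
          then show ?thesis using s by (simp add: E_def)
        qed
      qed
      show ?thesis using b e e2 z0e by simp
    qed
  qed
  have pE: "E (i*n) = E 0" by (simp add: E_def m_def)
  have pB: "\<forall>k. B (k + i*n) = B k" by (simp add: B_def m_def)
  obtain E' where E': "walk n T' E' B" using transfer[OF l _ sub EW pE pB] i by auto
  have "\<forall>t<n. B (j+n+t) = 0"
  proof (intro allI impI)
    fix t assume t: "t < n"
    have "\<not> (j \<le> (j+n+t) mod m \<and> (j+n+t) mod m < j+n)"
    proof (cases "j+n+t < m")
      case True then show ?thesis by simp
    next
      case False
      then have ge: "m \<le> j+n+t" by simp
      have "j+n+t-m < m" using m2 t jm by simp
      then have "(j+n+t) mod m = j+n+t-m" using le_mod_geq[OF ge] by simp
      then show ?thesis using t m2 ge by simp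
    qed
    then show "B (j+n+t) = 0" unfolding B_def by auto
  qed
  then have "E' (j+n) = 0" using window[OF l' F' E' walk_zero[OF l'], of "j+n" 0] by simp
  moreover have "\<forall>t<n. B (j+t) = C (j+t)"
    using jm by (simp add: B_def)
  then have "E' (j+n) = W (j+n)" using window[OF l' F' E' W, of j n] by simp
  moreover have "W (j+n) = W j" using walk_per[OF l' F' W pc] by simp
  ultimately show ?thesis by simp
qed


definition tw :: "nat \<Rightarrow> ('v,'f) trellis \<Rightarrow> ('w,'f) trellis \<Rightarrow> nat \<Rightarrow> 'v \<Rightarrow> 'w \<Rightarrow> bool" where
  "tw n T T' j v y \<longleftrightarrow> (\<exists>X A Y. walk n T X A \<and> (\<forall>k. X (k+n) = X k) \<and> (\<forall>k. A (k+n) = A k)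
     \<and> X j = v \<and> walk n T' Y A \<and> Y j = y)"

definition fmap :: "nat \<Rightarrow> ('v,'f) trellis \<Rightarrow> ('w,'f) trellis \<Rightarrow> nat \<Rightarrow> 'v \<Rightarrow> 'w" where
  "fmap n T T' j v = (SOME y. tw n T T' j v y)"

lemma WD:
  fixes sc :: "'f::field \<Rightarrow> 'v::ab_group_add \<Rightarrow> 'v" and sc' :: "'f \<Rightarrow> 'w::ab_group_add \<Rightarrow> 'w"
  assumes l: "linear_trellis sc n T" and l': "linear_trellis sc' n T'"
    and F': "fragment_one_to_one n T'"
    and i: "i \<ge> 2" and sub: "icode n T i \<subseteq> icode n T' i" and j: "j < n"
    and t1: "tw n T T' j v y1" and t2: "tw n T T' j v y2"
  shows "y1 = y2"
proof -
  obtain X1 A1 Y1 where 1: "walk n T X1 A1" "\<forall>k. X1 (k+n) = X1 k" "\<forall>k. A1 (k+n) = A1 k"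
     "X1 j = v" "walk n T' Y1 A1" "Y1 j = y1" using t1 unfolding tw_def by blast
  obtain X2 A2 Y2 where 2: "walk n T X2 A2" "\<forall>k. X2 (k+n) = X2 k" "\<forall>k. A2 (k+n) = A2 k"
     "X2 j = v" "walk n T' Y2 A2" "Y2 j = y2" using t2 unfolding tw_def by blast
  have "(\<lambda>k. Y1 k - Y2 k) j = 0"
    apply (rule crux[OF l l' F' i sub walk_diff[OF l 1(1) 2(1)] _ _ j _ walk_diff[OF l' 1(5) 2(5)]])
    using 1 2 by auto
  then show ?thesis using 1 2 by simp
qed

lemma tw_ex:
  fixes sc :: "'f::field \<Rightarrow> 'v::ab_group_add \<Rightarrow> 'v" and sc' :: "'f \<Rightarrow> 'w::ab_group_add \<Rightarrow> 'w"
  assumes l: "linear_trellis sc n T" and r: "reduced n T"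
    and i: "i \<ge> 2" and sub: "icode n T i \<subseteq> icode n T' i" and j: "j < n"
    and X: "walk n T X A" and px: "\<forall>k. X (k+n) = X k" and pa: "\<forall>k. A (k+n) = A k"
  shows "\<exists>Y. walk n T' Y A"
proof -
  have "X (0 + i*n) = X 0" using per_mult[of X n 0 i] px by blast
  moreover have "\<forall>k. A (k + i*n) = A k" using per_mult[of A n _ i] pa by blast
  ultimately show ?thesis using transfer[OF l _ sub X] i by auto
qed

lemma fmap_eq:
  fixes sc :: "'f::field \<Rightarrow> 'v::ab_group_add \<Rightarrow> 'v" and sc' :: "'f \<Rightarrow> 'w::ab_group_add \<Rightarrow> 'w"
  assumes l: "linear_trellis sc n T" and l': "linear_trellis sc' n T'"
    and F': "fragment_one_to_one n T'"
    and i: "i \<ge> 2" and sub: "icode n T i \<subseteq> icode n T' i" and j: "j < n"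
    and t: "tw n T T' j v y"
  shows "fmap n T T' j v = y"
proof -
  have "tw n T T' j v (fmap n T T' j v)" unfolding fmap_def using t by (rule someI)
  then show ?thesis using WD[OF l l' F' i sub j _ t] by blast
qed

lemma fwd:
  fixes sc :: "'f::field \<Rightarrow> 'v::ab_group_add \<Rightarrow> 'v" and sc' :: "'f \<Rightarrow> 'w::ab_group_add \<Rightarrow> 'w"
  assumes l: "linear_trellis sc n T" and l': "linear_trellis sc' n T'"
    and F': "fragment_one_to_one n T'" and r: "reduced n T"
    and i: "i \<ge> 2" and sub: "icode n T i \<subseteq> icode n T' i" and j: "j < n"
    and e: "(v,a,w) \<in> tedges T j"
  shows "(fmap n T T' j v, a, fmap n T T' (Suc j mod n) w) \<in> tedges T' j"
proof -
  obtain X A where X: "walk n T X A" "\<forall>k. X (k+n) = X k" "\<forall>k. A (k+n) = A k"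
     "X j = v" "A j = a" "X (Suc j) = w" using edge_walk[OF l r j e] by blast
  obtain Y where Y: "walk n T' Y A" using tw_ex[OF l r i sub j X(1-3)] by blast
  have py: "\<forall>k. Y (k+n) = Y k" using walk_per[OF l' F' Y X(3)] .
  have j1: "Suc j mod n < n" using j by simp
  have "tw n T T' j v (Y j)" unfolding tw_def using X Y by blast
  then have f1: "fmap n T T' j v = Y j" using fmap_eq[OF l l' F' i sub j] by blast
  have "X (Suc j mod n) = w" using per_mod[OF X(2)] X(6) by simp
  then have "tw n T T' (Suc j mod n) w (Y (Suc j mod n))" unfolding tw_def using X Y by blast
  then have f2: "fmap n T T' (Suc j mod n) w = Y (Suc j)" using fmap_eq[OF l l' F' i sub j1] per_mod[OF py]
    by simp
  have "(Y j, A j, Y (Suc j)) \<in> tedges T' (j mod n)" using Y unfolding walk_def by blast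
  then show ?thesis using f1 f2 X(5) j by simp
qed

lemma inv:
  fixes sc :: "'f::field \<Rightarrow> 'v::ab_group_add \<Rightarrow> 'v" and sc' :: "'f \<Rightarrow> 'w::ab_group_add \<Rightarrow> 'w"
  assumes l: "linear_trellis sc n T" and l': "linear_trellis sc' n T'"
    and F: "fragment_one_to_one n T" and F': "fragment_one_to_one n T'" and r: "reduced n T"
    and i: "i \<ge> 2" and eq: "icode n T i = icode n T' i" and j: "j < n"
    and v: "v \<in> tverts T j"
  shows "fmap n T T' j v \<in> tverts T' j" "fmap n T' T j (fmap n T T' j v) = v"
proof -
  obtain X A where X: "walk n T X A" "\<forall>k. X (k+n) = X k" "\<forall>k. A (k+n) = A k" "X j = v"
    using vert_walk[OF l r j v] by blast
  obtain Y where Y: "walk n T' Y A" using tw_ex[OF l r i _ j X(1-3)] eq by blast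
  have py: "\<forall>k. Y (k+n) = Y k" using walk_per[OF l' F' Y X(3)] .
  have "tw n T T' j v (Y j)" unfolding tw_def using X Y by blast
  then have f1: "fmap n T T' j v = Y j" using fmap_eq[OF l l' F' i _ j] eq by blast
  show "fmap n T T' j v \<in> tverts T' j" using f1 walk_vert[OF l' Y, of j] j by simp
  have "tw n T' T j (Y j) v" unfolding tw_def using X Y py by blast
  then show "fmap n T' T j (fmap n T T' j v) = v" using f1 fmap_eq[OF l' l F i _ j] eq by simp
qed

lemma main1:
  fixes sc :: "'f::field \<Rightarrow> 'v::ab_group_add \<Rightarrow> 'v" and sc' :: "'f \<Rightarrow> 'w::ab_group_add \<Rightarrow> 'w"
  assumes l: "linear_trellis sc n T" and l': "linear_trellis sc' n T'"
    and F: "fragment_one_to_one n T" and F': "fragment_one_to_one n T'"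
    and r: "reduced n T" and r': "reduced n T'"
    and i: "i > 1" and eq: "icode n T i = icode n T' i"
  shows "trellis_iso n T T'"
  unfolding trellis_iso_def
proof (intro exI allI impI conjI)
  fix j assume j: "j < n"
  have i2: "i \<ge> 2" using i by simp
  let ?f = "fmap n T T'" and ?g = "fmap n T' T"
  note a = inv[OF l l' F F' r i2 eq]
  note b = inv[OF l' l F' F r' i2 eq[symmetric]]
  show "bij_betw (?f j) (tverts T j) (tverts T' j)"
    apply (rule bij_betw_byWitness[where f'="?g j"])
    using a b j by auto
  have j1: "Suc j mod n < n" using j by simp
  show "\<forall>v\<in>tverts T j. \<forall>w\<in>tverts T (Suc j mod n). \<forall>a.
           ((v, a, w) \<in> tedges T j) = ((?f j v, a, ?f (Suc j mod n) w) \<in> tedges T' j)"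
  proof (intro ballI allI iffI)
    fix v w a assume v: "v \<in> tverts T j" and w: "w \<in> tverts T (Suc j mod n)"
    { assume "(v, a, w) \<in> tedges T j"
      then show "(?f j v, a, ?f (Suc j mod n) w) \<in> tedges T' j"
        using fwd[OF l l' F' r i2 _ j] eq by blast }
    { assume "(?f j v, a, ?f (Suc j mod n) w) \<in> tedges T' j"
      then have "(?g j (?f j v), a, ?g (Suc j mod n) (?f (Suc j mod n) w)) \<in> tedges T j"
        using fwd[OF l' l F r' i2 _ j] eq by blast
      then show "(v, a, w) \<in> tedges T j" using a(2)[OF j v] a(2)[OF j1 w] by simp }
  qed
qed


lemma rot:
  assumes n: "n \<ge> 1" and j: "j < n" and q: "Q 0 = Q n"
    and e: "\<forall>t<n. (Q t, L t, Q (Suc t)) \<in> tedges T ((j+t) mod n)"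
  shows "walk n T (\<lambda>k. Q ((k+n-j) mod n)) (\<lambda>k. L ((k+n-j) mod n))"
  unfolding walk_def
proof
  fix k
  let ?t = "(k+n-j) mod n"
  have t: "?t < n" using n by simp
  have s: "(Suc k + n - j) mod n = Suc (k+n-j) mod n" using j by (simp add: Suc_diff_le)
  have s2: "Q ((Suc k + n - j) mod n) = Q (Suc ?t)"
    using s q by (simp add: mod_Suc)
  have tm: "(j + ?t) mod n = k mod n"
  proof -
    have "(j + ?t) mod n = (j + (k+n-j)) mod n" by (simp add: mod_add_right_eq)
    also have "j + (k+n-j) = k + n" using j by simp
    finally show ?thesis by simp
  qed
  show "(Q ?t, L ?t, Q ((Suc k + n - j) mod n)) \<in> tedges T (k mod n)"
    using e t s2 tm by metis
qed

lemma closed_icode: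
  assumes l: "linear_trellis sc n T" and j: "j < n" and q: "Q 0 = Q n"
    and e: "\<forall>t<n. (Q t, L t, Q (Suc t)) \<in> tedges T ((j+t) mod n)"
  shows "map (\<lambda>k. L ((k+n-j) mod n)) [0..<n] \<in> icode n T 1"
proof -
  have n: "n \<ge> 1" using lin_n[OF l] .
  have w: "walk n T (\<lambda>k. Q ((k+n-j) mod n)) (\<lambda>k. L ((k+n-j) mod n))" using rot[OF n j q e] .
  have "(\<lambda>k. Q ((k+n-j) mod n)) (1*n) = (\<lambda>k. Q ((k+n-j) mod n)) 0"
    using j by (simp add: mod_if)
  from walk_icode[OF l w this] show ?thesis by simp
qed

lemma sc_neg:
  fixes sc :: "'f::field \<Rightarrow> 'v::ab_group_add \<Rightarrow> 'v"
  assumes vs: "vector_space sc" shows "sc (-1) x = - x"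
proof -
  have ax: "\<And>a b x. sc (a+b) x = sc a x + sc b x" "\<And>x. sc 1 x = x"
    using vs unfolding vector_space_def by auto
  have "sc 0 x + sc 0 x = sc 0 x + 0" using ax(1)[of 0 0 x] by simp
  then have z: "sc 0 x = 0" by simp
  have "sc (-1) x + x = 0" using ax(1)[of "-1" 1 x] ax(2) z by simp
  then show "sc (-1) x = - x" by (simp add: eq_neg_iff_add_eq_0)
qed

lemma lin_vdiff:
  fixes sc :: "'f::field \<Rightarrow> 'v::ab_group_add \<Rightarrow> 'v"
  assumes l: "linear_trellis sc n T" and j: "j < n" and x: "x \<in> tverts T j" and y: "y \<in> tverts T j"
  shows "x - y \<in> tverts T j"
proof -
  have vs: "vector_space sc" using l by (simp add: linear_trellis_def)
  have "sc (-1) y \<in> tverts T j" using l j y unfolding linear_trellis_def by blast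
  then have "- y \<in> tverts T j" using sc_neg[OF vs] by simp
  then have "x + - y \<in> tverts T j" using l j x unfolding linear_trellis_def by blast
  then show ?thesis by simp
qed

lemma mod_ne_j:
  assumes j: "j < (n::nat)" and s: "0 < s" "s < n"
  shows "(j + s) mod n \<noteq> j"
proof (cases "j + s < n")
  case True then show ?thesis using s by simp
next
  case False
  then have ge: "n \<le> j + s" by simp
  have "j + s - n < n" using j s by simp
  then have "(j + s) mod n = j + s - n" using le_mod_geq[OF ge] by simp
  then show ?thesis using s ge by simp
qed

lemma mod_back:
  assumes j: "j < (n::nat)" and k: "k < n"
  shows "(j + (k+n-j) mod n) mod n = k"
proof -
  have "(j + (k+n-j) mod n) mod n = (j + (k+n-j)) mod n" by (simp add: mod_add_right_eq)
  also have "j + (k+n-j) = k + n" using j by simp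
  finally show ?thesis using k by simp
qed

lemma merge_code:
  fixes sc :: "'f::field \<Rightarrow> 'v::ab_group_add \<Rightarrow> 'v"
  assumes l: "linear_trellis sc n T" and j: "j < n" and vw: "v \<noteq> w"
    and v: "v \<in> tverts T j"
    and p0: "P 0 = v" and pn: "P n = w"
    and pe: "\<forall>t<n. (P t, 0, P (Suc t)) \<in> tedges T ((j+t) mod n)"
  shows "icode n (merge n T j v w) 1 = icode n T 1"
proof
  have n: "n \<ge> 1" using lin_n[OF l] .
  let ?M = "merge n T j v w"
  have tvM: "\<And>k. tverts ?M k = (if k = j then tverts T k - {w} else tverts T k)"
    by (simp add: merge_def)
  have teM: "\<And>k. tedges ?M k = (\<lambda>(a, l, b). (if k = j \<and> a = w then v else a, l,
                                   if Suc k mod n = j \<and> b = w then v else b)) ` tedges T k"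
    by (simp add: merge_def)
  show "icode n T 1 \<subseteq> icode n ?M 1"
  proof
    fix as assume "as \<in> icode n T 1"
    then obtain vs where c: "icycle n T 1 vs as" unfolding icode_def by blast
    have len: "length as = n" "length vs = Suc n" using c unfolding icycle_def tpath_def by auto
    have lh: "vs ! n = vs ! 0" using c len unfolding icycle_def by (simp add: lastnth)
    have ed: "\<And>k. k < n \<Longrightarrow> (vs!k, as!k, vs!Suc k) \<in> tedges T k"
      using c len unfolding icycle_def tpath_def by auto
    have v0: "vs ! 0 \<in> tverts T 0" using c unfolding icycle_def tpath_def by auto
    define vs2 where "vs2 = map (\<lambda>k. if k mod n = j \<and> vs!k = w then v else vs!k) [0..<Suc n]"
    have vs2n: "\<And>k. k < Suc n \<Longrightarrow> vs2 ! k = (if k mod n = j \<and> vs!k = w then v else vs!k)"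
      unfolding vs2_def by (simp del: upt_Suc)
    have "icycle n ?M 1 vs2 as"
      unfolding icycle_def tpath_def
    proof (intro conjI allI impI)
      show "length vs2 = Suc (length as)" using len by (simp add: vs2_def)
      show "vs2 ! 0 \<in> tverts ?M (0 mod n)"
        using vs2n[of 0] v0 v vw tvM by (cases "j = 0") auto
      fix k assume k: "k < length as"
      have kn: "k < n" using k len by simp
      have "(vs2!k, as!k, vs2!Suc k) = (\<lambda>(a, l, b). (if k = j \<and> a = w then v else a, l,
                                   if Suc k mod n = j \<and> b = w then v else b)) (vs!k, as!k, vs!Suc k)"
        using vs2n[of k] vs2n[of "Suc k"] kn by simp
      then have "(vs2!k, as!k, vs2!Suc k) \<in> tedges ?M k"
        unfolding teM by (rule rev_image_eqI[OF ed[OF kn]])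
      then show "(vs2!k, as!k, vs2!Suc k) \<in> tedges ?M ((0 + k) mod n)" using kn by simp
    next
      show "length as = 1 * n" using len by simp
      have "vs2 ! n = vs2 ! 0" using vs2n[of n] vs2n[of 0] lh by simp
      then show "last vs2 = hd vs2" using len
        by (simp add: vs2_def last_conv_nth hd_conv_nth del: upt_Suc)
    qed
    then show "as \<in> icode n ?M 1" unfolding icode_def by blast
  qed
  show "icode n ?M 1 \<subseteq> icode n T 1"
  proof
    fix as assume "as \<in> icode n ?M 1"
    then obtain vs where c: "icycle n ?M 1 vs as" unfolding icode_def by blast
    have len: "length as = n" "length vs = Suc n" using c unfolding icycle_def tpath_def by auto
    have lh: "vs ! n = vs ! 0" using c len unfolding icycle_def by (simp add: lastnth)
    have ed: "\<And>k. k < n \<Longrightarrow> (vs!k, as!k, vs!Suc k) \<in> tedges ?M k"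
      using c len unfolding icycle_def tpath_def by auto
    have "\<forall>k. \<exists>p. k < n \<longrightarrow> ((fst p, as!k, snd p) \<in> tedges T k \<and>
        (if k = j \<and> fst p = w then v else fst p) = vs!k \<and>
        (if Suc k mod n = j \<and> snd p = w then v else snd p) = vs!Suc k)"
    proof
      fix k
      show "\<exists>p. k < n \<longrightarrow> ((fst p, as!k, snd p) \<in> tedges T k \<and>
        (if k = j \<and> fst p = w then v else fst p) = vs!k \<and>
        (if Suc k mod n = j \<and> snd p = w then v else snd p) = vs!Suc k)"
      proof (cases "k < n")
        case True
        then have "(vs!k, as!k, vs!Suc k) \<in> (\<lambda>(a, l, b). (if k = j \<and> a = w then v else a, l,
                                   if Suc k mod n = j \<and> b = w then v else b)) ` tedges T k"
          using ed teM by simp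
        then obtain a lb b where "(a,lb,b) \<in> tedges T k" and
          eq: "(vs!k, as!k, vs!Suc k) = (if k = j \<and> a = w then v else a, lb,
                                   if Suc k mod n = j \<and> b = w then v else b)"
          by auto
        then show ?thesis by (intro exI[of _ "(a,b)"]) auto
      qed simp
    qed
    from choice[OF this] obtain pf where pf: "\<forall>k. k < n \<longrightarrow> ((fst (pf k), as!k, snd (pf k)) \<in> tedges T k \<and>
        (if k = j \<and> fst (pf k) = w then v else fst (pf k)) = vs!k \<and>
        (if Suc k mod n = j \<and> snd (pf k) = w then v else snd (pf k)) = vs!Suc k)" by blast
    define x where "x = (\<lambda>k. fst (pf k))"
    define y where "y = (\<lambda>k. snd (pf k))"
    have xy: "\<And>k. k < n \<Longrightarrow> (x k, as!k, y k) \<in> tedges T k \<and>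
        (if k = j \<and> x k = w then v else x k) = vs!k \<and>
        (if Suc k mod n = j \<and> y k = w then v else y k) = vs!Suc k"
      using pf unfolding x_def y_def by blast
    define R where "R = (\<lambda>t. if t < n then x ((j+t) mod n) else y ((j+n-1) mod n))"
    define L where "L = (\<lambda>t. as ! ((j+t) mod n))"
    have Rp: "\<forall>t<n. (R t, L t, R (Suc t)) \<in> tedges T ((j+t) mod n)"
    proof (intro allI impI)
      fix t assume t: "t < n"
      let ?k = "(j+t) mod n"
      have k: "?k < n" using n by simp
      have e1: "(x ?k, as!?k, y ?k) \<in> tedges T ?k" using xy[OF k] by blast
      have "R (Suc t) = y ?k"
      proof (cases "Suc t = n")
        case True
        then have "j + t = j + n - 1" by simp
        then show ?thesis using True by (simp add: R_def)
      next
        case False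
        then have st: "Suc t < n" using t by simp
        let ?k' = "(j + Suc t) mod n"
        have k': "?k' < n" using n by simp
        have kj: "?k' \<noteq> j" using mod_ne_j[OF j _ st] by simp
        have xk': "x ?k' = vs ! ?k'" using xy[OF k'] kj by simp
        have sk: "Suc ?k mod n = ?k'" by (simp add: mod_Suc_eq)
        have yk: "y ?k = vs ! Suc ?k" using xy[OF k] sk kj by simp
        have "vs ! Suc ?k = vs ! ?k'"
        proof (cases "Suc ?k < n")
          case True then show ?thesis using sk by simp
        next
          case False
          then have "Suc ?k = n" using k by simp
          then show ?thesis using sk lh by simp
        qed
        then show ?thesis using st xk' yk by (simp add: R_def)
      qed
      then show "(R t, L t, R (Suc t)) \<in> tedges T ((j+t) mod n)"
        using e1 t by (simp add: R_def L_def)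
    qed
    have R0: "(if R 0 = w then v else R 0) = vs ! j"
      using xy[OF j] j n by (auto simp: R_def split: if_splits)
    have Rn: "(if R n = w then v else R n) = vs ! j"
    proof -
      let ?k0 = "(j+n-1) mod n"
      have k0: "?k0 < n" using n by simp
      have "Suc ?k0 mod n = Suc (j+n-1) mod n" by (simp add: mod_Suc_eq)
      also have "Suc (j+n-1) = j + n" using n by simp
      finally have s0: "Suc ?k0 mod n = j" using j by simp
      have vv: "vs ! Suc ?k0 = vs ! j"
      proof (cases "Suc ?k0 < n")
        case True then show ?thesis using s0 by simp
      next
        case False
        then have "Suc ?k0 = n" using k0 by simp
        then show ?thesis using s0 lh by simp
      qed
      show ?thesis using xy[OF k0] s0 vv by (auto simp: R_def split: if_splits)
    qed
    have cs: "R 0 = R n \<or> (R 0 = v \<and> R n = w) \<or> (R 0 = w \<and> R n = v)"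
      using R0 Rn by (auto split: if_splits)
    have "\<exists>Q. Q 0 = Q n \<and> (\<forall>t<n. (Q t, L t, Q (Suc t)) \<in> tedges T ((j+t) mod n))"
    proof -
      { assume "R 0 = R n" then have ?thesis using Rp by blast }
      moreover
      { assume a: "R 0 = v \<and> R n = w"
        have "\<forall>t<n. (R t - P t, L t, R (Suc t) - P (Suc t)) \<in> tedges T ((j+t) mod n)"
        proof (intro allI impI)
          fix t assume t: "t < n"
          show "(R t - P t, L t, R (Suc t) - P (Suc t)) \<in> tedges T ((j+t) mod n)"
            using lin_diff[OF l _ Rp[rule_format, OF t] pe[rule_format, OF t]] n by simp
        qed
        moreover have "R 0 - P 0 = R n - P n" using a p0 pn by simp
        ultimately have ?thesis by (intro exI[of _ "\<lambda>t. R t - P t"]) simp }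
      moreover
      { assume a: "R 0 = w \<and> R n = v"
        have "\<forall>t<n. (R t + P t, L t, R (Suc t) + P (Suc t)) \<in> tedges T ((j+t) mod n)"
        proof (intro allI impI)
          fix t assume t: "t < n"
          show "(R t + P t, L t, R (Suc t) + P (Suc t)) \<in> tedges T ((j+t) mod n)"
            using lin_add[OF l _ Rp[rule_format, OF t] pe[rule_format, OF t]] n by simp
        qed
        moreover have "R 0 + P 0 = R n + P n" using a p0 pn by (simp add: add.commute)
        ultimately have ?thesis by (intro exI[of _ "\<lambda>t. R t + P t"]) simp }
      ultimately show ?thesis using cs by blast
    qed
    then obtain Q where q: "Q 0 = Q n" "\<forall>t<n. (Q t, L t, Q (Suc t)) \<in> tedges T ((j+t) mod n)" by blast
    have "map (\<lambda>k. L ((k+n-j) mod n)) [0..<n] \<in> icode n T 1" using closed_icode[OF l j q] .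
    moreover have "map (\<lambda>k. L ((k+n-j) mod n)) [0..<n] = as"
    proof (rule nth_equalityI)
      show "length (map (\<lambda>k. L ((k+n-j) mod n)) [0..<n]) = length as" using len by simp
      fix k assume "k < length (map (\<lambda>k. L ((k+n-j) mod n)) [0..<n])"
      then have k: "k < n" by simp
      then show "map (\<lambda>k. L ((k+n-j) mod n)) [0..<n] ! k = as ! k"
        using mod_back[OF j k] by (simp add: L_def)
    qed
    ultimately show "as \<in> icode n T 1" by simp
  qed
qed

lemma F1_of:
  fixes sc :: "'f::field \<Rightarrow> 'v::ab_group_add \<Rightarrow> 'v"
  assumes l: "linear_trellis sc n T" and nm: "nonmergeable n T" and oo: "one_to_one n T"
  shows "fragment_one_to_one n T"
  unfolding fragment_one_to_one_def
proof (intro allI impI)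
  fix j vs vs' as as'
  assume j: "j < n" and p1: "tpath n T j vs as" and p2: "tpath n T j vs' as'"
    and la: "length as = n" and la': "length as' = n" and ne: "(vs, as) \<noteq> (vs', as')"
  have n: "n \<ge> 1" using lin_n[OF l] .
  show "as \<noteq> as'"
  proof
    assume aa: "as = as'"
    have lv: "length vs = Suc n" "length vs' = Suc n" using p1 p2 la la' unfolding tpath_def by auto
    have vne: "vs \<noteq> vs'" using ne aa by simp
    define P where "P = (\<lambda>t. vs ! t - vs' ! t)"
    have pe: "\<forall>t<n. (P t, 0, P (Suc t)) \<in> tedges T ((j+t) mod n)"
    proof (intro allI impI)
      fix t assume t: "t < n"
      have "(vs!t, as!t, vs!Suc t) \<in> tedges T ((j+t) mod n)" "(vs'!t, as!t, vs'!Suc t) \<in> tedges T ((j+t) mod n)"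
        using p1 p2 t la aa unfolding tpath_def by auto
      from lin_diff[OF l _ this] show "(P t, 0, P (Suc t)) \<in> tedges T ((j+t) mod n)"
        using n by (simp add: P_def)
    qed
    obtain t0 where t0: "t0 \<le> n" "P t0 \<noteq> 0"
    proof -
      have "\<exists>t<Suc n. vs ! t \<noteq> vs' ! t" using vne lv nth_equalityI by metis
      then show ?thesis using that unfolding P_def by (auto simp: less_Suc_eq_le)
    qed
    have jm: "j mod n = j" using j by simp
    have v0: "vs ! 0 \<in> tverts T j" "vs' ! 0 \<in> tverts T j" using p1 p2 jm unfolding tpath_def by auto
    have vn: "vs ! n \<in> tverts T j \<and> vs' ! n \<in> tverts T j"
    proof -
      let ?k = "(j + (n - 1)) mod n"
      have k: "?k < n" using n by simp
      have nl: "n - 1 < length as" using n la by simp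
      have "(vs!(n-1), as!(n-1), vs!Suc (n-1)) \<in> tedges T ?k"
        using p1 nl la unfolding tpath_def by blast
      moreover have "(vs'!(n-1), as'!(n-1), vs'!Suc (n-1)) \<in> tedges T ?k"
        using p2 nl la la' unfolding tpath_def by (metis)
      ultimately have "(vs!(n-1), as!(n-1), vs!Suc (n-1)) \<in> tedges T ?k" "(vs'!(n-1), as!(n-1), vs'!Suc (n-1)) \<in> tedges T ?k"
        using aa by auto
      moreover have "tedges T ?k \<subseteq> tverts T ?k \<times> UNIV \<times> tverts T (Suc ?k mod n)"
        using l k unfolding linear_trellis_def is_trellis_def by simp
      moreover have "Suc ?k mod n = j" using n j by (simp add: mod_Suc_eq)
      moreover have "Suc (n-1) = n" using n by simp
      ultimately show ?thesis by auto
    qed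
    show False
    proof (cases "P 0 = P n")
      case True
      have w: "walk n T (\<lambda>k. P ((k+n-j) mod n)) (\<lambda>k. (\<lambda>_. 0) ((k+n-j) mod n))"
        using rot[OF n j True, of "\<lambda>_. 0" T] pe by simp
      have c1: "icycle n T 1 (map (\<lambda>k. P ((k+n-j) mod n)) [0..<Suc (1*n)]) (map (\<lambda>_. 0) [0..<1*n])"
      proof -
        have "1*n + n - j = (n - j) + n" using j by simp
        then have "(\<lambda>k. P ((k+n-j) mod n)) (1*n) = (\<lambda>k. P ((k+n-j) mod n)) 0" by simp
        from walk_icycle[OF l w this] show ?thesis .
      qed
      have c2: "icycle n T 1 (map (\<lambda>_. 0) [0..<Suc (1*n)]) (map (\<lambda>_. 0) [0..<1*n])"
        using walk_icycle[OF l walk_zero[OF l], of 1] by simp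
      let ?k = "(j + t0) mod n"
      have "?k < n" using n by simp
      then have k: "?k < Suc n" by simp
      have "(?k + n - j) mod n = t0 mod n"
      proof -
        have "(?k + n - j) mod n = ((j + t0) mod n + (n - j)) mod n" using j by simp
        also have "\<dots> = (j + t0 + (n - j)) mod n" by (simp add: mod_add_left_eq)
        also have "j + t0 + (n - j) = t0 + n" using j by simp
        finally show ?thesis by simp
      qed
      moreover have "P (t0 mod n) \<noteq> 0" using t0 True by (cases "t0 = n") auto
      ultimately have "map (\<lambda>k. P ((k+n-j) mod n)) [0..<Suc (1*n)] ! ?k \<noteq> map (\<lambda>_. 0) [0..<Suc (1*n)] ! ?k"
        using k by (simp del: upt_Suc)
      then have "map (\<lambda>k. P ((k+n-j) mod n)) [0..<Suc (1*n)] \<noteq> map (\<lambda>_. 0) [0..<Suc (1*n)]" by metis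
      then show False using oo c1 c2 unfolding one_to_one_def by blast
    next
      case False
      have "P 0 \<in> tverts T j" using lin_vdiff[OF l j] v0 by (simp add: P_def)
      moreover have "P n \<in> tverts T j" using lin_vdiff[OF l j] vn by (simp add: P_def)
      moreover have "icode n (merge n T j (P 0) (P n)) 1 = icode n T 1"
        using merge_code[OF l j False _ refl refl pe] calculation by simp
      ultimately show False using nm j False unfolding nonmergeable_def by blast
    qed
  qed
qed


theorem mainTheorem15:
  fixes sc :: "'f::{field,finite} \<Rightarrow> 'v::ab_group_add \<Rightarrow> 'v"
    and sc' :: "'f \<Rightarrow> 'w::ab_group_add \<Rightarrow> 'w"
    and T :: "('v, 'f) trellis" and T' :: "('w, 'f) trellis"
    and n i :: nat
  shows
    "(linear_trellis sc n T \<and> linear_trellis sc' n T' \<and>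
      fragment_one_to_one n T \<and> fragment_one_to_one n T' \<and>
      connected_trellis n T \<and> connected_trellis n T' \<and>
      reduced n T \<and> reduced n T' \<and>
      i > 1 \<and> icode n T i = icode n T' i \<longrightarrow> trellis_iso n T T') \<and>
     (linear_trellis sc n T \<and> linear_trellis sc' n T' \<and>
      nonmergeable n T \<and> nonmergeable n T' \<and>
      one_to_one n T \<and> one_to_one n T' \<and>
      reduced n T \<and> reduced n T' \<and>
      i > 1 \<and> icode n T i = icode n T' i \<longrightarrow> trellis_iso n T T')"
proof (intro conjI impI)
  assume h: "linear_trellis sc n T \<and> linear_trellis sc' n T' \<and>
      fragment_one_to_one n T \<and> fragment_one_to_one n T' \<and>
      connected_trellis n T \<and> connected_trellis n T' \<and>
      reduced n T \<and> reduced n T' \<and>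
      i > 1 \<and> icode n T i = icode n T' i"
  then show "trellis_iso n T T'" using main1[of sc n T sc' T' i] by blast
next
  assume h: "linear_trellis sc n T \<and> linear_trellis sc' n T' \<and>
      nonmergeable n T \<and> nonmergeable n T' \<and>
      one_to_one n T \<and> one_to_one n T' \<and>
      reduced n T \<and> reduced n T' \<and>
      i > 1 \<and> icode n T i = icode n T' i"
  then have "fragment_one_to_one n T" "fragment_one_to_one n T'"
    using F1_of[of sc n T] F1_of[of sc' n T'] by blast+
  then show "trellis_iso n T T'" using h main1[of sc n T sc' T' i] by blast
qed

end
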